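(* Let $\vec{G_1},\dots,\vec{G_k}$ be pairwise vertex-disjoint oriented graphs such that $\vec{G_1}$ is a DDMOG and, for every $2\le i\le k$, $\vec{G_i}$ is a DDMOG with $imb(\vec{G_i})=0$. Then the union $\vec{G}=\bigcup_{i=1}^k\vec{G_i}$ is a DDMOG.
   Context: An oriented graph is a finite digraph without loops such that whenever $(u,v)$ is an arc, $(v,u)$ is not. For a vertex $v$, $N^+(v)=\{x:(x,v)\text{ is an arc}\}$, $N^-(v)=\{x:(v,x)\text{ is an arc}\}$, $imb(v)=|N^+(v)|-|N^-(v)|$, and $imb(\vec{G})=\max_v|imb(v)|$. For a labeling $f$, $wt_f(v)=\sum_{x\in N^+(v)}f(x)-\sum_{x\in N^-(v)}f(x)$. A DDM labeling of an oriented graph on $n$ vertices is a bijection $f:V\to\{1,\dots,n\}$ with $wt_f(v)=0$ for all $v$; a DDMOG is an oriented graph admitting a DDM labeling. *)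

theory Defs
  imports Main
begin

definition oriented_graph :: "'a set \<Rightarrow> ('a \<times> 'a) set \<Rightarrow> bool" where
  "oriented_graph V A \<longleftrightarrow> finite V \<and> A \<subseteq> V \<times> V \<and> (\<forall>v. (v, v) \<notin> A)
     \<and> (\<forall>u v. (u, v) \<in> A \<longrightarrow> (v, u) \<notin> A)"

text \<open>N^+(v) = {x. (x,v) arc}, N^-(v) = {x. (v,x) arc} (paper's convention).\<close>
definition in_nbrs :: "('a \<times> 'a) set \<Rightarrow> 'a \<Rightarrow> 'a set" where
  "in_nbrs A v = {x. (x, v) \<in> A}"

definition out_nbrs :: "('a \<times> 'a) set \<Rightarrow> 'a \<Rightarrow> 'a set" where
  "out_nbrs A v = {x. (v, x) \<in> A}"

definition imb :: "('a \<times> 'a) set \<Rightarrow> 'a \<Rightarrow> int" where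
  "imb A v = int (card (in_nbrs A v)) - int (card (out_nbrs A v))"

definition imb_graph :: "'a set \<Rightarrow> ('a \<times> 'a) set \<Rightarrow> int" where
  "imb_graph V A = (if V = {} then 0 else Max ((\<lambda>v. \<bar>imb A v\<bar>) ` V))"

definition wt :: "('a \<times> 'a) set \<Rightarrow> ('a \<Rightarrow> nat) \<Rightarrow> 'a \<Rightarrow> int" where
  "wt A f v = (\<Sum>x\<in>in_nbrs A v. int (f x)) - (\<Sum>x\<in>out_nbrs A v. int (f x))"

definition DDM_labeling :: "'a set \<Rightarrow> ('a \<times> 'a) set \<Rightarrow> ('a \<Rightarrow> nat) \<Rightarrow> bool" where
  "DDM_labeling V A f \<longleftrightarrow> bij_betw f V {1..card V} \<and> (\<forall>v\<in>V. wt A f v = 0)"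

definition DDMOG :: "'a set \<Rightarrow> ('a \<times> 'a) set \<Rightarrow> bool" where
  "DDMOG V A \<longleftrightarrow> oriented_graph V A \<and> (\<exists>f. DDM_labeling V A f)"

end

theory Submission
  imports Defs
begin

lemma imb_zero:
  assumes "oriented_graph V A" "imb_graph V A = 0" "v \<in> V"
  shows "imb A v = 0"
proof -
  have fin: "finite V" using assms(1) unfolding oriented_graph_def by simp
  have "\<bar>imb A v\<bar> \<le> Max ((\<lambda>v. \<bar>imb A v\<bar>) ` V)"
    using fin assms(3) by (intro Max_ge) auto
  with assms(2,3) show ?thesis unfolding imb_graph_def by (auto split: if_splits)
qed

lemma union2:
  assumes og1: "oriented_graph V1 A1" and og2: "oriented_graph V2 A2"
    and d1: "DDMOG V1 A1" and d2: "DDMOG V2 A2" and i2: "imb_graph V2 A2 = 0"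
    and disj: "V1 \<inter> V2 = {}"
  shows "DDMOG (V1 \<union> V2) (A1 \<union> A2)"
proof -
  have f1: "finite V1" "A1 \<subseteq> V1 \<times> V1" "\<forall>v. (v, v) \<notin> A1" "\<forall>u v. (u, v) \<in> A1 \<longrightarrow> (v, u) \<notin> A1"
    using og1 unfolding oriented_graph_def by auto
  have f2: "finite V2" "A2 \<subseteq> V2 \<times> V2" "\<forall>v. (v, v) \<notin> A2" "\<forall>u v. (u, v) \<in> A2 \<longrightarrow> (v, u) \<notin> A2"
    using og2 unfolding oriented_graph_def by auto
  have og: "oriented_graph (V1 \<union> V2) (A1 \<union> A2)"
    unfolding oriented_graph_def using f1 f2 disj by blast
  obtain g1 where g1: "bij_betw g1 V1 {1..card V1}" "\<forall>v\<in>V1. wt A1 g1 v = 0"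
    using d1 unfolding DDMOG_def DDM_labeling_def by blast
  obtain g2 where g2: "bij_betw g2 V2 {1..card V2}" "\<forall>v\<in>V2. wt A2 g2 v = 0"
    using d2 unfolding DDMOG_def DDM_labeling_def by blast
  define n1 where "n1 = card V1"
  define n2 where "n2 = card V2"
  define g where "g v = (if v \<in> V1 then g1 v else g2 v + n1)" for v
  have b1: "bij_betw g V1 {1..n1}"
    using g1(1) unfolding n1_def by (rule bij_betw_cong[THEN iffD1, rotated]) (simp add: g_def)
  have sh: "bij_betw (\<lambda>x. x + n1) {1..n2} {n1+1..n1+n2}"
    unfolding bij_betw_def
  proof
    show "inj_on (\<lambda>x. x + n1) {1..n2}" by (auto simp: inj_on_def)
    show "(\<lambda>x. x + n1) ` {1..n2} = {n1 + 1..n1 + n2}"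
    proof
      show "(\<lambda>x. x + n1) ` {1..n2} \<subseteq> {n1 + 1..n1 + n2}" by auto
      show "{n1 + 1..n1 + n2} \<subseteq> (\<lambda>x. x + n1) ` {1..n2}"
      proof
        fix y assume "y \<in> {n1 + 1..n1 + n2}"
        then have "y - n1 \<in> {1..n2}" "y = (y - n1) + n1" by auto
        then show "y \<in> (\<lambda>x. x + n1) ` {1..n2}" by blast
      qed
    qed
  qed
  have b2': "bij_betw ((\<lambda>x. x + n1) \<circ> g2) V2 {n1+1..n1+n2}"
    using bij_betw_trans[OF g2(1)[folded n2_def] sh] .
  have b2: "bij_betw g V2 {n1+1..n1+n2}"
  proof -
    have "\<forall>x\<in>V2. ((\<lambda>x. x + n1) \<circ> g2) x = g x" using disj by (auto simp: g_def)
    have eq: "bij_betw ((\<lambda>x. x + n1) \<circ> g2) V2 {n1+1..n1+n2} = bij_betw g V2 {n1+1..n1+n2}"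
      by (rule bij_betw_cong) (use disj in \<open>auto simp: g_def\<close>)
    show ?thesis using eq b2' by (rule iffD1)
  qed
  have b: "bij_betw g (V1 \<union> V2) ({1..n1} \<union> {n1+1..n1+n2})"
    by (rule bij_betw_combine[OF b1 b2]) auto
  have iv: "{1..n1} \<union> {n1+1..n1+n2} = {1..card (V1 \<union> V2)}"
    using f1(1) f2(1) disj unfolding n1_def n2_def by (auto simp: card_Un_disjoint)
  have w: "wt (A1 \<union> A2) g v = 0" if v: "v \<in> V1 \<union> V2" for v
  proof (cases "v \<in> V1")
    case True
    have ei: "in_nbrs (A1 \<union> A2) v = in_nbrs A1 v" using True f2(2) disj
      unfolding in_nbrs_def by blast
    have eo: "out_nbrs (A1 \<union> A2) v = out_nbrs A1 v" using True f2(2) disj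
      unfolding out_nbrs_def by blast
    have si: "in_nbrs A1 v \<subseteq> V1" "out_nbrs A1 v \<subseteq> V1"
      using f1(2) unfolding in_nbrs_def out_nbrs_def by auto
    have "wt (A1 \<union> A2) g v = wt A1 g1 v"
      unfolding wt_def ei eo
      using si by (intro arg_cong2[where f="(-)"] sum.cong) (auto simp: g_def)
    then show ?thesis using g1(2) True by simp
  next
    case False
    then have True: "v \<in> V2" using v by simp
    have ei: "in_nbrs (A1 \<union> A2) v = in_nbrs A2 v" using True f1(2) disj
      unfolding in_nbrs_def by blast
    have eo: "out_nbrs (A1 \<union> A2) v = out_nbrs A2 v" using True f1(2) disj
      unfolding out_nbrs_def by blast
    have si: "in_nbrs A2 v \<subseteq> V2" "out_nbrs A2 v \<subseteq> V2"
      using f2(2) unfolding in_nbrs_def out_nbrs_def by auto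
    have s1: "(\<Sum>x\<in>in_nbrs A2 v. int (g x)) = (\<Sum>x\<in>in_nbrs A2 v. int (g2 x) + int n1)"
      using si disj by (intro sum.cong) (auto simp: g_def)
    have s2: "(\<Sum>x\<in>out_nbrs A2 v. int (g x)) = (\<Sum>x\<in>out_nbrs A2 v. int (g2 x) + int n1)"
      using si disj by (intro sum.cong) (auto simp: g_def)
    have "wt (A1 \<union> A2) g v = wt A2 g2 v + int n1 * imb A2 v"
      unfolding wt_def ei eo s1 s2 imb_def by (simp add: sum.distrib algebra_simps)
    then show ?thesis using g2(2) True imb_zero[OF og2 i2 True] by simp
  qed
  have "DDM_labeling (V1 \<union> V2) (A1 \<union> A2) g"
    unfolding DDM_labeling_def using b w unfolding iv by blast
  then show ?thesis unfolding DDMOG_def using og by blast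
qed

lemma aux:
  fixes V :: "nat \<Rightarrow> 'a set" and A :: "nat \<Rightarrow> ('a \<times> 'a) set" and k :: nat
  shows "k \<ge> 1 \<Longrightarrow> (\<forall>i\<in>{1..k}. oriented_graph (V i) (A i))
    \<Longrightarrow> (\<forall>i\<in>{1..k}. \<forall>j\<in>{1..k}. i \<noteq> j \<longrightarrow> V i \<inter> V j = {})
    \<Longrightarrow> DDMOG (V 1) (A 1)
    \<Longrightarrow> (\<forall>i\<in>{2..k}. DDMOG (V i) (A i) \<and> imb_graph (V i) (A i) = 0)
    \<Longrightarrow> DDMOG (\<Union>i\<in>{1..k}. V i) (\<Union>i\<in>{1..k}. A i)"
proof (induction k)
  case 0
  then show ?case by simp
next
  case (Suc n)
  show ?case
  proof (cases "n = 0")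
    case True
    then show ?thesis using Suc.prems by simp
  next
    case False
    have IH: "DDMOG (\<Union>i\<in>{1..n}. V i) (\<Union>i\<in>{1..n}. A i)"
      using Suc.prems False by (intro Suc.IH) auto
    have og1: "oriented_graph (\<Union>i\<in>{1..n}. V i) (\<Union>i\<in>{1..n}. A i)"
      using IH unfolding DDMOG_def by blast
    have s: "Suc n \<in> {1..Suc n}" "Suc n \<in> {2..Suc n}" using False by auto
    have dj: "(\<Union>i\<in>{1..n}. V i) \<inter> V (Suc n) = {}"
    proof -
      have "V i \<inter> V (Suc n) = {}" if "i \<in> {1..n}" for i
      proof -
        have "i \<in> {1..Suc n}" "Suc n \<in> {1..Suc n}" "i \<noteq> Suc n" using that by auto
        then show ?thesis using Suc.prems(3) by blast
      qed
      then show ?thesis by blast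
    qed
    have eV: "(\<Union>i\<in>{1..Suc n}. V i) = (\<Union>i\<in>{1..n}. V i) \<union> V (Suc n)"
      using Suc.prems(1) by (simp add: atLeastAtMostSuc_conv Un_commute)
    have eA: "(\<Union>i\<in>{1..Suc n}. A i) = (\<Union>i\<in>{1..n}. A i) \<union> A (Suc n)"
      using Suc.prems(1) by (simp add: atLeastAtMostSuc_conv Un_commute)
    show ?thesis unfolding eV eA
      using union2[OF og1 _ IH _ _ dj] Suc.prems(2,5) s by blast
  qed
qed

theorem theorem5:
  fixes V :: "nat \<Rightarrow> 'a set" and A :: "nat \<Rightarrow> ('a \<times> 'a) set" and k :: nat
  assumes "k \<ge> 1"
    and "\<forall>i\<in>{1..k}. oriented_graph (V i) (A i)"
    and "\<forall>i\<in>{1..k}. \<forall>j\<in>{1..k}. i \<noteq> j \<longrightarrow> V i \<inter> V j = {}"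
    and "DDMOG (V 1) (A 1)"
    and "\<forall>i\<in>{2..k}. DDMOG (V i) (A i) \<and> imb_graph (V i) (A i) = 0"
  shows "DDMOG (\<Union>i\<in>{1..k}. V i) (\<Union>i\<in>{1..k}. A i)"
  using aux[OF assms] .

end
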